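(* Let $L$ be a loop which is torsion-free nilpotent of class $n$ (in the sense defined in the context). Then the left multiplication group $\mathrm{LMlt}(L)$ is a nilpotent group of class at most $n$.
   Context: A loop is a set $L$ with a binary product and a two-sided identity $e$ such that for each $a\in L$ the left and right multiplications $L_a\colon x\mapsto ax$ and $R_a\colon x\mapsto xa$ are bijections of $L$. The left multiplication group $\mathrm{LMlt}(L)$ is the subgroup of the group of all permutations of the set $L$ generated by all $L_a$, $a\in L$. The loop algebra $\mathbb{Q}L$ is the $\mathbb{Q}$-vector space with basis $L$ and the product extended bilinearly from that of $L$ (a non-associative algebra). The augmentation ideal $I$ is the kernel of the linear map $\mathbb{Q}L\to\mathbb{Q}$ sending every element of $L$ to $1$. For $k\ge1$, $I^k$ denotes the ideal of $\mathbb{Q}L$ spanned by all products (with any bracketing) of at least $k$ elements of $I$. The $k$-th dimension subloop is $D_kL=\{g\in L\mid g-1\in I^k\}$ (these are normal subloops). The loop $L$ is called torsion-free nilpotent of class $n$ if $D_{n+1}L$ is trivial while $D_nL$ is not. For a group $G$, $\gamma_1G=G$, $\gamma_{k+1}G=[G,\gamma_kG]$, and $G$ is nilpotent of class at most $n$ if $\gamma_{n+1}G$ is trivial. *)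

theory Defs
  imports "HOL-Algebra.Algebra"
begin

definition is_loop :: "'a set \<Rightarrow> ('a \<Rightarrow> 'a \<Rightarrow> 'a) \<Rightarrow> 'a \<Rightarrow> bool" where
  "is_loop L m e \<longleftrightarrow>
     (\<forall>x\<in>L. \<forall>y\<in>L. m x y \<in> L) \<and> e \<in> L \<and>
     (\<forall>x\<in>L. m e x = x \<and> m x e = x) \<and>
     (\<forall>a\<in>L. bij_betw (\<lambda>x. m a x) L L \<and> bij_betw (\<lambda>x. m x a) L L)"

section \<open>The loop algebra QL: finitely supported rational functions on L\<close>

definition supp :: "('a \<Rightarrow> rat) \<Rightarrow> 'a set" where
  "supp u = {x. u x \<noteq> 0}"

definition loop_alg :: "'a set \<Rightarrow> ('a \<Rightarrow> rat) set" where
  "loop_alg L = {u. supp u \<subseteq> L \<and> finite (supp u)}"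

definition basis :: "'a \<Rightarrow> ('a \<Rightarrow> rat)" where
  "basis g = (\<lambda>x. if x = g then 1 else 0)"

definition alg_mult :: "('a \<Rightarrow> 'a \<Rightarrow> 'a) \<Rightarrow> ('a \<Rightarrow> rat) \<Rightarrow> ('a \<Rightarrow> rat) \<Rightarrow> ('a \<Rightarrow> rat)" where
  "alg_mult m u v = (\<lambda>z. \<Sum>x\<in>supp u. \<Sum>y\<in>supp v. if m x y = z then u x * v y else 0)"

definition aug_ideal :: "'a set \<Rightarrow> ('a \<Rightarrow> rat) set" where
  "aug_ideal L = {u \<in> loop_alg L. (\<Sum>x\<in>supp u. u x) = 0}"

inductive is_prod :: "'a set \<Rightarrow> ('a \<Rightarrow> 'a \<Rightarrow> 'a) \<Rightarrow> nat \<Rightarrow> ('a \<Rightarrow> rat) \<Rightarrow> bool"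
  for L m where
  single: "u \<in> aug_ideal L \<Longrightarrow> is_prod L m 1 u"
| mult: "is_prod L m i u \<Longrightarrow> is_prod L m j v \<Longrightarrow> is_prod L m (i + j) (alg_mult m u v)"

inductive in_aug_pow :: "'a set \<Rightarrow> ('a \<Rightarrow> 'a \<Rightarrow> 'a) \<Rightarrow> nat \<Rightarrow> ('a \<Rightarrow> rat) \<Rightarrow> bool"
  for L m k where
  gen: "is_prod L m j u \<Longrightarrow> k \<le> j \<Longrightarrow> in_aug_pow L m k u"
| zero: "in_aug_pow L m k (\<lambda>_. 0)"
| add: "in_aug_pow L m k u \<Longrightarrow> in_aug_pow L m k v \<Longrightarrow> in_aug_pow L m k (\<lambda>x. u x + v x)"
| smult: "in_aug_pow L m k u \<Longrightarrow> in_aug_pow L m k (\<lambda>x. c * u x)"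
| lmult: "in_aug_pow L m k u \<Longrightarrow> a \<in> loop_alg L \<Longrightarrow> in_aug_pow L m k (alg_mult m a u)"
| rmult: "in_aug_pow L m k u \<Longrightarrow> a \<in> loop_alg L \<Longrightarrow> in_aug_pow L m k (alg_mult m u a)"

definition aug_pow :: "'a set \<Rightarrow> ('a \<Rightarrow> 'a \<Rightarrow> 'a) \<Rightarrow> nat \<Rightarrow> ('a \<Rightarrow> rat) set" where
  "aug_pow L m k = {u. in_aug_pow L m k u}"

definition dim_subloop :: "'a set \<Rightarrow> ('a \<Rightarrow> 'a \<Rightarrow> 'a) \<Rightarrow> 'a \<Rightarrow> nat \<Rightarrow> 'a set" where
  "dim_subloop L m e k = {g \<in> L. (\<lambda>x. basis g x - basis e x) \<in> aug_pow L m k}"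

definition torsion_free_nilpotent_class :: "'a set \<Rightarrow> ('a \<Rightarrow> 'a \<Rightarrow> 'a) \<Rightarrow> 'a \<Rightarrow> nat \<Rightarrow> bool" where
  "torsion_free_nilpotent_class L m e n \<longleftrightarrow>
     1 \<le> n \<and> dim_subloop L m e (Suc n) = {e} \<and> dim_subloop L m e n \<noteq> {e}"

definition LMlt_carrier :: "'a set \<Rightarrow> ('a \<Rightarrow> 'a \<Rightarrow> 'a) \<Rightarrow> ('a \<Rightarrow> 'a) set" where
  "LMlt_carrier L m = generate (BijGroup L) {restrict (\<lambda>x. m a x) L | a. a \<in> L}"

definition LMlt :: "'a set \<Rightarrow> ('a \<Rightarrow> 'a \<Rightarrow> 'a) \<Rightarrow> ('a \<Rightarrow> 'a) monoid" where
  "LMlt L m = (BijGroup L)\<lparr>carrier := LMlt_carrier L m\<rparr>"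

fun lower_central :: "('g, 'b) monoid_scheme \<Rightarrow> nat \<Rightarrow> 'g set" where
  "lower_central G 0 = carrier G"
| "lower_central G (Suc 0) = carrier G"
| "lower_central G (Suc (Suc k)) =
     generate G {x \<otimes>\<^bsub>G\<^esub> y \<otimes>\<^bsub>G\<^esub> inv\<^bsub>G\<^esub> x \<otimes>\<^bsub>G\<^esub> inv\<^bsub>G\<^esub> y | x y.
                   x \<in> carrier G \<and> y \<in> lower_central G (Suc k)}"

definition nilpotent_class_le :: "('g, 'b) monoid_scheme \<Rightarrow> nat \<Rightarrow> bool" where
  "nilpotent_class_le G n \<longleftrightarrow> group G \<and> lower_central G (Suc n) = {\<one>\<^bsub>G\<^esub>}"

end

theory Submission imports Defs begin

definition Tact :: "'a set \<Rightarrow> ('a \<Rightarrow> 'a) \<Rightarrow> ('a \<Rightarrow> rat) \<Rightarrow> ('a \<Rightarrow> rat)" where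
  "Tact L g v = (\<lambda>z. if z \<in> L then v (inv_into L g z) else 0)"

lemma Tact_diff: "Tact L g (\<lambda>z. u z - v z) = (\<lambda>z. Tact L g u z - Tact L g v z)"
  by (auto simp: Tact_def)
lemma Tact_add: "Tact L g (\<lambda>z. u z + v z) = (\<lambda>z. Tact L g u z + Tact L g v z)"
  by (auto simp: Tact_def)
lemma Tact_smult: "Tact L g (\<lambda>z. c * u z) = (\<lambda>z. c * Tact L g u z)"
  by (auto simp: Tact_def)
lemma Tact_zero: "Tact L g (\<lambda>z. 0) = (\<lambda>z. 0)"
  by (auto simp: Tact_def)

lemma inv_into_restrict: "inv_into L (restrict f L) = inv_into L f"
  unfolding inv_into_def by (rule ext) (metis (no_types, lifting) restrict_apply')

lemma Bij_bij: "g \<in> Bij L \<Longrightarrow> bij_betw g L L" by (simp add: Bij_def)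

lemma Tact_compose:
  assumes g: "g \<in> Bij L" and h: "h \<in> Bij L"
  shows "Tact L (compose L g h) v = Tact L g (Tact L h v)"
proof (rule ext)
  fix z
  show "Tact L (compose L g h) v z = Tact L g (Tact L h v) z"
  proof (cases "z \<in> L")
    case True
    have bg: "bij_betw g L L" and bh: "bij_betw h L L" using g h Bij_bij by auto
    have bgh: "bij_betw (g \<circ> h) L L" using bg bh bij_betw_trans by blast
    have i1: "inv_into L g z \<in> L" using True bg by (metis bij_betw_imp_surj_on inv_into_into)
    hence i2: "inv_into L h (inv_into L g z) \<in> L" using bh by (metis bij_betw_imp_surj_on inv_into_into)
    have "g (h (inv_into L h (inv_into L g z))) = z"
      using i1 True bg bh by (simp add: bij_betw_inv_into_right)
    hence "inv_into L (g \<circ> h) z = inv_into L h (inv_into L g z)"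
      using bij_betw_inv_into_left[OF bgh i2] by simp
    thus ?thesis using True i1 unfolding Tact_def compose_def inv_into_restrict by (simp add: comp_def)
  qed (simp add: Tact_def)
qed

lemma Tact_one: "supp v \<subseteq> L \<Longrightarrow> Tact L (\<lambda>x\<in>L. x) v = v"
proof (rule ext)
  fix z assume s: "supp v \<subseteq> L"
  show "Tact L (\<lambda>x\<in>L. x) v z = v z"
  proof (cases "z \<in> L")
    case True
    have "inv_into L (\<lambda>x. x) z = z"
      using True bij_betw_inv_into_left[OF bij_betw_id[of L] True] by simp
    thus ?thesis using True unfolding Tact_def inv_into_restrict by simp
  next
    case False
    hence "v z = 0" using s unfolding supp_def by blast
    thus ?thesis using False unfolding Tact_def by simp
  qed
qed

lemma Tact_inv_l:
  assumes g: "g \<in> Bij L" and s: "supp v \<subseteq> L"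
  shows "Tact L (\<lambda>x\<in>L. inv_into L g x) (Tact L g v) = v"
  by (metis Bij_compose_restrict_eq Tact_compose Tact_one g restrict_inv_into_Bij s)

lemma Tact_inv_r:
  assumes g: "g \<in> Bij L" and s: "supp v \<subseteq> L"
  shows "Tact L g (Tact L (\<lambda>x\<in>L. inv_into L g x) v) = v"
proof -
  have "compose L g (\<lambda>x\<in>L. inv_into L g x) = (\<lambda>x\<in>L. x)"
  proof (rule ext)
    fix x
    have bg: "bij_betw g L L" using g Bij_bij by auto
    show "compose L g (\<lambda>x\<in>L. inv_into L g x) x = (\<lambda>x\<in>L. x) x"
      using bg by (cases "x \<in> L") (auto simp: compose_def bij_betw_inv_into_right)
  qed
  thus ?thesis
    by (metis Tact_compose Tact_one g restrict_inv_into_Bij s)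
qed

lemma Tact_basis:
  assumes g: "g \<in> Bij L" and x: "x \<in> L"
  shows "Tact L g (basis x) = basis (g x)"
proof (rule ext)
  fix z
  have bg: "bij_betw g L L" using g Bij_bij by auto
  have gx: "g x \<in> L" using bg x bij_betwE by blast
  show "Tact L g (basis x) z = basis (g x) z"
  proof (cases "z \<in> L")
    case True
    have "(inv_into L g z = x) = (z = g x)"
      using True bg x by (metis bij_betw_inv_into_left bij_betw_inv_into_right)
    thus ?thesis using True by (simp add: Tact_def basis_def)
  qed (use gx in \<open>auto simp: Tact_def basis_def\<close>)
qed

lemma supp_Tact:
  assumes g: "g \<in> Bij L"
  shows "supp (Tact L g v) \<subseteq> g ` supp v"
proof
  fix z assume "z \<in> supp (Tact L g v)"
  hence z: "z \<in> L" "v (inv_into L g z) \<noteq> 0" by (auto simp: supp_def Tact_def split: if_splits)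
  have "z = g (inv_into L g z)" using z g Bij_bij by (metis bij_betw_inv_into_right)
  thus "z \<in> g ` supp v" using z by (auto simp: supp_def)
qed

lemma Tact_V:
  assumes g: "g \<in> Bij L" and v: "v \<in> loop_alg L"
  shows "Tact L g v \<in> loop_alg L"
proof -
  have "g ` supp v \<subseteq> L" using v g Bij_bij unfolding loop_alg_def by (metis bij_betw_imp_surj_on image_mono mem_Collect_eq)
  thus ?thesis using supp_Tact[OF g, of v] v unfolding loop_alg_def
    by (auto intro: finite_subset)
qed

lemma V_zero: "(\<lambda>z. 0) \<in> loop_alg L" by (simp add: loop_alg_def supp_def)
lemma V_add: "u \<in> loop_alg L \<Longrightarrow> v \<in> loop_alg L \<Longrightarrow> (\<lambda>z. u z + v z) \<in> loop_alg L"
proof -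
  assume a: "u \<in> loop_alg L" "v \<in> loop_alg L"
  have "supp (\<lambda>z. u z + v z) \<subseteq> supp u \<union> supp v" by (auto simp: supp_def)
  thus ?thesis using a unfolding loop_alg_def by (auto intro: finite_subset)
qed
lemma V_smult: "u \<in> loop_alg L \<Longrightarrow> (\<lambda>z. c * u z) \<in> loop_alg L"
proof -
  assume a: "u \<in> loop_alg L"
  have "supp (\<lambda>z. c * u z) \<subseteq> supp u" by (auto simp: supp_def)
  thus ?thesis using a unfolding loop_alg_def by (auto intro: finite_subset)
qed
lemma V_diff: "u \<in> loop_alg L \<Longrightarrow> v \<in> loop_alg L \<Longrightarrow> (\<lambda>z. u z - v z) \<in> loop_alg L"
proof -
  assume a: "u \<in> loop_alg L" "v \<in> loop_alg L"
  have "supp (\<lambda>z. u z - v z) \<subseteq> supp u \<union> supp v" by (auto simp: supp_def)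
  thus ?thesis using a unfolding loop_alg_def by (auto intro: finite_subset)
qed
lemma V_basis: "x \<in> L \<Longrightarrow> basis x \<in> loop_alg L"
proof -
  assume "x \<in> L"
  have "supp (basis x) = {x}" by (auto simp: supp_def basis_def)
  thus ?thesis using \<open>x \<in> L\<close> by (simp add: loop_alg_def)
qed

lemma sum_supp_eq:
  assumes "finite A" "supp w \<subseteq> A"
  shows "(\<Sum>x\<in>supp w. w x) = (\<Sum>x\<in>A. w x)"
  by (rule sum.mono_neutral_left) (use assms in \<open>auto simp: supp_def\<close>)

lemma aug_Tact:
  assumes g: "g \<in> Bij L" and v: "v \<in> loop_alg L"
  shows "(\<lambda>z. Tact L g v z - v z) \<in> aug_ideal L"
proof -
  let ?w = "\<lambda>z. Tact L g v z - v z"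
  have fv: "finite (supp v)" and sv: "supp v \<subseteq> L" using v by (auto simp: loop_alg_def)
  define A where "A = supp v \<union> g ` supp v"
  have fA: "finite A" using fv by (simp add: A_def)
  have sw: "supp ?w \<subseteq> A" using supp_Tact[OF g, of v] by (auto simp: supp_def A_def)
  have inj: "inj_on g (supp v)" using g sv Bij_bij by (meson bij_betw_def inj_on_subset)
  have "(\<Sum>x\<in>A. Tact L g v x) = (\<Sum>x\<in>g ` supp v. Tact L g v x)"
    by (rule sum.mono_neutral_right) (use fA supp_Tact[OF g, of v] in \<open>auto simp: A_def supp_def\<close>)
  also have "\<dots> = (\<Sum>y\<in>supp v. Tact L g v (g y))" by (rule sum.reindex[OF inj, simplified])
  also have "\<dots> = (\<Sum>y\<in>supp v. v y)"
  proof (rule sum.cong)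
    fix y assume y: "y \<in> supp v"
    hence yL: "y \<in> L" using sv by auto
    have "g y \<in> L" using yL g Bij_bij bij_betwE by blast
    thus "Tact L g v (g y) = v y" using yL Bij_bij[OF g] by (simp add: Tact_def bij_betw_inv_into_left)
  qed simp
  also have "\<dots> = (\<Sum>x\<in>A. v x)" by (rule sum_supp_eq) (use fA in \<open>auto simp: A_def\<close>)
  finally have eq: "(\<Sum>x\<in>A. Tact L g v x) = (\<Sum>x\<in>A. v x)" .
  have "(\<Sum>x\<in>supp ?w. ?w x) = (\<Sum>x\<in>A. ?w x)" by (rule sum_supp_eq[OF fA sw])
  also have "\<dots> = 0" using eq by (simp add: sum_subtractf)
  finally show ?thesis using V_diff[OF Tact_V[OF g v] v] by (simp add: aug_ideal_def)
qed


locale lp =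
  fixes L :: "'a set" and m :: "'a \<Rightarrow> 'a \<Rightarrow> 'a" and e :: 'a
  assumes loop: "is_loop L m e"
begin

definition la :: "'a \<Rightarrow> 'a \<Rightarrow> 'a" where "la a = restrict (\<lambda>x. m a x) L"

lemma la_Bij: "a \<in> L \<Longrightarrow> la a \<in> Bij L"
proof -
  assume a: "a \<in> L"
  have "bij_betw (\<lambda>x. m a x) L L" using loop a by (simp add: is_loop_def)
  hence "bij_betw (la a) L L" unfolding la_def by (rule bij_betw_cong[THEN iffD1, rotated]) simp
  thus ?thesis by (simp add: Bij_def la_def)
qed

lemma e_L: "e \<in> L" using loop by (simp add: is_loop_def)

lemma alg_mult_la:
  assumes a: "a \<in> L" and v: "v \<in> loop_alg L"
  shows "alg_mult m (\<lambda>x. basis a x - basis e x) v = (\<lambda>z. Tact L (la a) v z - v z)"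
proof (cases "a = e")
  case True
  have "la e = (\<lambda>x\<in>L. x)" using loop by (auto simp: la_def is_loop_def)
  moreover have "supp (\<lambda>x. basis e x - basis e x) = {}" by (simp add: supp_def)
  ultimately show ?thesis using True v Tact_one[of v L] by (auto simp: alg_mult_def loop_alg_def)
next
  case False
  have fv: "finite (supp v)" and sv: "supp v \<subseteq> L" using v by (auto simp: loop_alg_def)
  have sab: "supp (\<lambda>x. basis a x - basis e x) = {a, e}" using False by (auto simp: supp_def basis_def)
  have bij: "bij_betw (la a) L L" using la_Bij[OF a] Bij_bij by auto
  show ?thesis
  proof (rule ext)
    fix z
    have s1: "(\<Sum>y\<in>supp v. if m e y = z then (basis a e - basis e e) * v y else 0) = - v z"
    proof -
      have "(\<Sum>y\<in>supp v. if m e y = z then (basis a e - basis e e) * v y else 0)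
          = (\<Sum>y\<in>supp v. if y = z then - v y else 0)"
        by (rule sum.cong) (use sv loop False in \<open>auto simp: is_loop_def basis_def\<close>)
      also have "\<dots> = - v z" using fv by (simp add: sum.delta supp_def)
      finally show ?thesis .
    qed
    have s2: "(\<Sum>y\<in>supp v. if m a y = z then (basis a a - basis e a) * v y else 0) = Tact L (la a) v z"
    proof (cases "z \<in> L")
      case True
      define y0 where "y0 = inv_into L (la a) z"
      have y0L: "y0 \<in> L" using True bij unfolding y0_def by (metis bij_betw_imp_surj_on inv_into_into)
      have "\<And>y. y \<in> L \<Longrightarrow> (m a y = z) = (y = y0)"
      proof -
        fix y assume yL: "y \<in> L"
        have "m a y = la a y" using yL by (simp add: la_def)
        thus "(m a y = z) = (y = y0)" using yL True bij unfolding y0_def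
          by (metis bij_betw_inv_into_left bij_betw_inv_into_right)
      qed
      hence "(\<Sum>y\<in>supp v. if m a y = z then (basis a a - basis e a) * v y else 0)
          = (\<Sum>y\<in>supp v. if y = y0 then v y else 0)"
        using sv False by (intro sum.cong) (auto simp: basis_def)
      also have "\<dots> = v y0" using fv by (simp add: sum.delta supp_def)
      finally show ?thesis using True by (simp add: Tact_def y0_def)
    next
      case False
      have "\<And>y. y \<in> supp v \<Longrightarrow> m a y \<noteq> z"
        using False sv loop a by (auto simp: is_loop_def)
      thus ?thesis using False by (simp add: Tact_def)
    qed
    show "alg_mult m (\<lambda>x. basis a x - basis e x) v z = Tact L (la a) v z - v z"
      unfolding alg_mult_def sab using False s1 s2 by simp
  qed
qed

inductive mon :: "nat \<Rightarrow> ('a \<Rightarrow> rat) \<Rightarrow> bool" where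
  m0: "v \<in> loop_alg L \<Longrightarrow> mon 0 v"
| mS: "mon k v \<Longrightarrow> a \<in> L \<Longrightarrow> mon (Suc k) (\<lambda>z. Tact L (la a) v z - v z)"

inductive inF :: "nat \<Rightarrow> ('a \<Rightarrow> rat) \<Rightarrow> bool" where
  gen: "mon j v \<Longrightarrow> k \<le> j \<Longrightarrow> inF k v"
| zero: "inF k (\<lambda>_. 0)"
| add: "inF k u \<Longrightarrow> inF k v \<Longrightarrow> inF k (\<lambda>x. u x + v x)"
| smult: "inF k u \<Longrightarrow> inF k (\<lambda>x. c * u x)"

lemma mon_V: "mon k v \<Longrightarrow> v \<in> loop_alg L"
  by (induction rule: mon.induct) (auto intro: V_diff Tact_V la_Bij)

lemma inF_V: "inF k v \<Longrightarrow> v \<in> loop_alg L"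
  by (induction rule: inF.induct) (auto intro: mon_V V_zero V_add V_smult)

lemma mon_prod: "mon k v \<Longrightarrow> 1 \<le> k \<Longrightarrow> is_prod L m k v"
proof (induction rule: mon.induct)
  case (m0 v) thus ?case by simp
next
  case (mS k v a)
  have vV: "v \<in> loop_alg L" using mS.hyps mon_V by blast
  show ?case
  proof (cases "k = 0")
    case True
    thus ?thesis using aug_Tact[OF la_Bij[OF mS.hyps(2)] vV] is_prod.single by simp
  next
    case False
    have p: "is_prod L m k v" using mS False by simp
    have "la a e = a" using mS.hyps(2) e_L loop by (simp add: la_def is_loop_def)
    hence "(\<lambda>z. Tact L (la a) (basis e) z - basis e z) = (\<lambda>x. basis a x - basis e x)"
      using Tact_basis[OF la_Bij[OF mS.hyps(2)] e_L] by simp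
    hence "(\<lambda>x. basis a x - basis e x) \<in> aug_ideal L"
      using aug_Tact[OF la_Bij[OF mS.hyps(2)] V_basis[OF e_L]] by simp
    hence "is_prod L m (1 + k) (alg_mult m (\<lambda>x. basis a x - basis e x) v)"
      using p is_prod.single is_prod.mult by blast
    thus ?thesis using alg_mult_la[OF mS.hyps(2) vV] by simp
  qed
qed

lemma inF_aug: "inF k u \<Longrightarrow> 1 \<le> k \<Longrightarrow> in_aug_pow L m k u"
proof (induction rule: inF.induct)
  case (gen j v k)
  thus ?case using mon_prod[OF gen(1)] in_aug_pow.gen by auto
qed (auto intro: in_aug_pow.intros)

lemma inF_mono: "inF k u \<Longrightarrow> j \<le> k \<Longrightarrow> inF j u"
  by (induction rule: inF.induct) (auto intro: inF.intros)

lemma inF0: "u \<in> loop_alg L \<Longrightarrow> inF 0 u"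
  using mon.m0 inF.gen by blast

lemma inF_neg: "inF k u \<Longrightarrow> inF k (\<lambda>x. - u x)"
  using inF.smult[of k u "-1"] by simp

lemma inF_diff: "inF k u \<Longrightarrow> inF k v \<Longrightarrow> inF k (\<lambda>x. u x - v x)"
  using inF.add[of k u "\<lambda>x. - v x"] inF_neg by simp

lemma X_step: "inF k u \<Longrightarrow> a \<in> L \<Longrightarrow> inF (Suc k) (\<lambda>z. Tact L (la a) u z - u z)"
proof (induction rule: inF.induct)
  case (gen j v k)
  thus ?case using mon.mS[OF gen(1) gen(3)] inF.gen[of "Suc j"] by auto
next
  case (zero k)
  thus ?case using inF.zero by (simp add: Tact_zero)
next
  case (add k u v)
  have "(\<lambda>z. Tact L (la a) (\<lambda>x. u x + v x) z - (u z + v z)) =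
        (\<lambda>z. (Tact L (la a) u z - u z) + (Tact L (la a) v z - v z))"
    by (simp add: Tact_add algebra_simps)
  thus ?case using add inF.add by simp
next
  case (smult k u c)
  have "(\<lambda>z. Tact L (la a) (\<lambda>x. c * u x) z - c * u z) =
        (\<lambda>z. c * (Tact L (la a) u z - u z))"
    by (simp add: Tact_smult algebra_simps)
  thus ?case using smult inF.smult by simp
qed

definition P :: "nat \<Rightarrow> ('a \<Rightarrow> 'a) \<Rightarrow> bool" where
  "P j g \<longleftrightarrow> (\<forall>k u. inF k u \<longrightarrow> inF (k + j) (\<lambda>z. Tact L g u z - u z))"

lemma P_gen: "a \<in> L \<Longrightarrow> P 1 (la a)"
  using X_step by (simp add: P_def)

lemma P_pres: "P j g \<Longrightarrow> inF k u \<Longrightarrow> inF k (Tact L g u)"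
proof -
  assume p: "P j g" and u: "inF k u"
  have "inF (k + j) (\<lambda>z. Tact L g u z - u z)" using p u by (simp add: P_def)
  hence "inF k (\<lambda>z. Tact L g u z - u z)" using inF_mono by simp
  hence "inF k (\<lambda>z. u z + (Tact L g u z - u z))" using u inF.add by blast
  thus ?thesis by simp
qed

lemma P_inj:
  assumes p: "P j g" and j: "1 \<le> j" and v: "v \<in> loop_alg L" and t: "inF k (Tact L g v)"
  shows "inF k v"
proof -
  have "\<forall>i. i \<le> k \<longrightarrow> inF i v"
  proof
    fix i show "i \<le> k \<longrightarrow> inF i v"
    proof (induction i)
      case 0 thus ?case using inF0 v by simp
    next
      case (Suc i)
      show ?case
      proof
        assume si: "Suc i \<le> k"
        hence vi: "inF i v" using Suc by simp
        have d: "inF (Suc i) (\<lambda>z. Tact L g v z - v z)"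
          using p vi j inF_mono by (fastforce simp: P_def)
        have "inF (Suc i) (Tact L g v)" using t si inF_mono by blast
        hence "inF (Suc i) (\<lambda>z. Tact L g v z - (Tact L g v z - v z))" using d inF_diff by blast
        thus "inF (Suc i) v" by simp
      qed
    qed
  qed
  thus ?thesis by simp
qed

lemma P_one: "P j (\<lambda>x\<in>L. x)"
  unfolding P_def
proof (intro allI impI)
  fix k u assume "inF k u"
  hence su: "supp u \<subseteq> L" using inF_V by (auto simp: loop_alg_def)
  show "inF (k + j) (\<lambda>z. Tact L (\<lambda>x\<in>L. x) u z - u z)" by (simp add: Tact_one[OF su] inF.zero)
qed

lemma P_mult:
  assumes g: "g \<in> Bij L" and h: "h \<in> Bij L" and pg: "P j g" and ph: "P j h"
  shows "P j (compose L g h)"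
  unfolding P_def
proof (intro allI impI)
  fix k u assume u: "inF k u"
  have hu: "inF k (Tact L h u)" using P_pres[OF ph u] .
  have "inF (k + j) (\<lambda>z. (Tact L g (Tact L h u) z - Tact L h u z) + (Tact L h u z - u z))"
    using pg ph u hu by (intro inF.add) (auto simp: P_def)
  thus "inF (k + j) (\<lambda>z. Tact L (compose L g h) u z - u z)"
    by (simp add: Tact_compose[OF g h])
qed

lemma P_inv:
  assumes g: "g \<in> Bij L" and pg: "P j g" and j: "1 \<le> j"
  shows "P j (\<lambda>x\<in>L. inv_into L g x)"
  unfolding P_def
proof (intro allI impI)
  fix k u assume u: "inF k u"
  let ?v = "Tact L (\<lambda>x\<in>L. inv_into L g x) u"
  have uV: "u \<in> loop_alg L" using inF_V u by blast
  hence su: "supp u \<subseteq> L" by (simp add: loop_alg_def)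
  have vV: "?v \<in> loop_alg L" using Tact_V[OF restrict_inv_into_Bij[OF g] uV] .
  have tv: "Tact L g ?v = u" using Tact_inv_r[OF g su] .
  have vk: "inF k ?v" using P_inj[OF pg j vV] tv u by simp
  have "inF (k + j) (\<lambda>z. Tact L g ?v z - ?v z)" using pg vk by (simp add: P_def)
  hence "inF (k + j) (\<lambda>z. - (u z - ?v z))" using tv inF_neg by fastforce
  thus "inF (k + j) (\<lambda>z. ?v z - u z)" by simp
qed

lemma P_comm:
  assumes x: "x \<in> Bij L" and y: "y \<in> Bij L" and px: "P i x" and py: "P j y"
    and i: "1 \<le> i" and j: "1 \<le> j"
  shows "P (i + j) (compose L (compose L (compose L x y) (\<lambda>z\<in>L. inv_into L x z)) (\<lambda>z\<in>L. inv_into L y z))"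
  unfolding P_def
proof (intro allI impI)
  fix k u assume u: "inF k u"
  let ?xi = "\<lambda>z\<in>L. inv_into L x z" and ?yi = "\<lambda>z\<in>L. inv_into L y z"
  have xi: "?xi \<in> Bij L" and yi: "?yi \<in> Bij L" using x y restrict_inv_into_Bij by auto
  have pxi: "P i ?xi" using P_inv[OF x px i] .
  have pyi: "P j ?yi" using P_inv[OF y py j] .
  let ?w = "Tact L ?xi (Tact L ?yi u)"
  have wk: "inF k ?w" using P_pres[OF pxi P_pres[OF pyi u]] .
  have uV: "u \<in> loop_alg L" using inF_V u by blast
  hence su: "supp u \<subseteq> L" by (simp add: loop_alg_def)
  have yuV: "Tact L ?yi u \<in> loop_alg L" using Tact_V[OF yi uV] .
  hence syu: "supp (Tact L ?yi u) \<subseteq> L" by (simp add: loop_alg_def)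
  have bk: "Tact L y (Tact L x ?w) = u"
    using Tact_inv_r[OF x syu] Tact_inv_r[OF y su] by simp
  have cu: "Tact L (compose L (compose L (compose L x y) ?xi) ?yi) u = Tact L x (Tact L y ?w)"
    using x y xi yi by (simp add: Tact_compose compose_Bij)
  let ?Yw = "\<lambda>z. Tact L y ?w z - ?w z" and ?Xw = "\<lambda>z. Tact L x ?w z - ?w z"
  have Yw: "inF (k + j) ?Yw" using py wk by (simp add: P_def)
  have Xw: "inF (k + i) ?Xw" using px wk by (simp add: P_def)
  have XYw: "inF (k + j + i) (\<lambda>z. Tact L x ?Yw z - ?Yw z)" using px Yw by (simp add: P_def)
  have YXw: "inF (k + i + j) (\<lambda>z. Tact L y ?Xw z - ?Xw z)" using py Xw by (simp add: P_def)
  have "inF (k + (i + j)) (\<lambda>z. (Tact L x ?Yw z - ?Yw z) - (Tact L y ?Xw z - ?Xw z))"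
  proof -
    have e1: "k + j + i = k + (i + j)" and e2: "k + i + j = k + (i + j)" by simp_all
    show ?thesis using inF_diff[OF XYw[unfolded e1] YXw[unfolded e2]] .
  qed
  moreover have "(\<lambda>z. (Tact L x ?Yw z - ?Yw z) - (Tact L y ?Xw z - ?Xw z))
     = (\<lambda>z. Tact L x (Tact L y ?w) z - Tact L y (Tact L x ?w) z)"
    by (simp add: Tact_diff)
  ultimately show "inF (k + (i + j)) (\<lambda>z. Tact L (compose L (compose L (compose L x y) ?xi) ?yi) u z - u z)"
    using cu bk by simp
qed

lemma P_conj:
  assumes g: "g \<in> Bij L" and h: "h \<in> Bij L" and pg: "P j g" and ph: "P 1 h"
  shows "P j (compose L (\<lambda>x\<in>L. inv_into L h x) (compose L g h))"
  unfolding P_def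
proof (intro allI impI)
  fix k u assume u: "inF k u"
  let ?hi = "\<lambda>x\<in>L. inv_into L h x"
  have hi: "?hi \<in> Bij L" using h restrict_inv_into_Bij by auto
  have phi: "P 1 ?hi" using P_inv[OF h ph] by simp
  have v: "inF k (Tact L h u)" using P_pres[OF ph u] .
  have d: "inF (k + j) (\<lambda>z. Tact L g (Tact L h u) z - Tact L h u z)" using pg v by (simp add: P_def)
  have "inF (k + j) (Tact L ?hi (\<lambda>z. Tact L g (Tact L h u) z - Tact L h u z))"
    using P_pres[OF phi d] .
  moreover have "supp u \<subseteq> L" using inF_V[OF u] by (simp add: loop_alg_def)
  ultimately show "inF (k + j) (\<lambda>z. Tact L (compose L ?hi (compose L g h)) u z - u z)"
    using Tact_inv_l[OF h] by (simp add: Tact_diff Tact_compose[OF hi compose_Bij[OF g h]] Tact_compose[OF g h])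
qed

end

context lp
begin

lemma one_Bij: "\<one>\<^bsub>BijGroup L\<^esub> = (\<lambda>x\<in>L. x)" by (simp add: BijGroup_def)
lemma mult_Bij: "a \<in> Bij L \<Longrightarrow> b \<in> Bij L \<Longrightarrow> a \<otimes>\<^bsub>BijGroup L\<^esub> b = compose L a b"
  by (simp add: BijGroup_def)
lemma carrier_Bij: "carrier (BijGroup L) = Bij L" by (simp add: BijGroup_def)

lemma gen_P:
  assumes S: "S \<subseteq> Bij L" and PS: "\<forall>s\<in>S. P j s" and j: "1 \<le> j"
    and g: "g \<in> generate (BijGroup L) S"
  shows "g \<in> Bij L \<and> P j g"
  using g
proof (induction rule: generate.induct)
  case one show ?case unfolding one_Bij using id_Bij P_one by blast
next
  case (incl h) thus ?case using S PS by auto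
next
  case (inv h)
  hence h: "h \<in> Bij L" "P j h" using S PS by auto
  show ?case unfolding inv_BijGroup[OF h(1)] using restrict_inv_into_Bij[OF h(1)] P_inv[OF h(1) h(2) j] by blast
next
  case (eng h1 h2) thus ?case by (simp add: mult_Bij compose_Bij P_mult)
qed

abbreviation "H \<equiv> LMlt_carrier L m"

lemma S0: "{restrict (\<lambda>x. m a x) L | a. a \<in> L} \<subseteq> Bij L \<and> (\<forall>s\<in>{restrict (\<lambda>x. m a x) L | a. a \<in> L}. P 1 s)"
  using la_Bij P_gen unfolding la_def by auto

lemma H_P: "g \<in> H \<Longrightarrow> g \<in> Bij L \<and> P 1 g"
  using gen_P[of _ 1 g] S0 unfolding LMlt_carrier_def by blast

lemma subH: "subgroup H (BijGroup L)"
proof -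
  have "{restrict (\<lambda>x. m a x) L | a. a \<in> L} \<subseteq> carrier (BijGroup L)" using S0 carrier_Bij by simp
  thus ?thesis unfolding LMlt_carrier_def by (rule group.generate_is_subgroup[OF group_BijGroup])
qed

lemma grp: "group (LMlt L m)"
  unfolding LMlt_def using group.subgroup_imp_group[OF group_BijGroup subH] .

lemma carrier_LMlt: "carrier (LMlt L m) = H" by (simp add: LMlt_def)
lemma mult_LMlt: "a \<otimes>\<^bsub>LMlt L m\<^esub> b = a \<otimes>\<^bsub>BijGroup L\<^esub> b" by (simp add: LMlt_def)
lemma one_LMlt: "\<one>\<^bsub>LMlt L m\<^esub> = (\<lambda>x\<in>L. x)" by (simp add: LMlt_def one_Bij)
lemma inv_LMlt: "a \<in> H \<Longrightarrow> inv\<^bsub>LMlt L m\<^esub> a = (\<lambda>x\<in>L. inv_into L a x)"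
proof -
  assume a: "a \<in> H"
  hence "inv\<^bsub>LMlt L m\<^esub> a = inv\<^bsub>BijGroup L\<^esub> a"
    unfolding LMlt_def using group.m_inv_consistent[OF group_BijGroup subH] by simp
  thus ?thesis using H_P[OF a] by (simp add: inv_BijGroup)
qed

lemma lc_P: "g \<in> lower_central (LMlt L m) (Suc j) \<Longrightarrow> g \<in> H \<and> P (Suc j) g"
proof (induction j arbitrary: g)
  case 0 thus ?case using H_P by (simp add: carrier_LMlt)
next
  case (Suc j)
  define C where "C = {x \<otimes>\<^bsub>LMlt L m\<^esub> y \<otimes>\<^bsub>LMlt L m\<^esub> inv\<^bsub>LMlt L m\<^esub> x \<otimes>\<^bsub>LMlt L m\<^esub> inv\<^bsub>LMlt L m\<^esub> y | x y.
                   x \<in> carrier (LMlt L m) \<and> y \<in> lower_central (LMlt L m) (Suc j)}"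
  have g: "g \<in> generate (LMlt L m) C" using Suc.prems by (simp add: C_def)
  have CH: "C \<subseteq> H"
  proof
    fix c assume "c \<in> C"
    then obtain x y where c: "c = x \<otimes>\<^bsub>LMlt L m\<^esub> y \<otimes>\<^bsub>LMlt L m\<^esub> inv\<^bsub>LMlt L m\<^esub> x \<otimes>\<^bsub>LMlt L m\<^esub> inv\<^bsub>LMlt L m\<^esub> y"
      and x: "x \<in> carrier (LMlt L m)" and y: "y \<in> lower_central (LMlt L m) (Suc j)"
      unfolding C_def by blast
    have "y \<in> carrier (LMlt L m)" using Suc.IH[OF y] carrier_LMlt by simp
    thus "c \<in> H" using c x grp carrier_LMlt by (metis group.inv_closed monoid.m_closed group.is_monoid)
  qed
  have CP: "\<forall>c\<in>C. P (Suc (Suc j)) c"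
  proof
    fix c assume "c \<in> C"
    then obtain x y where c: "c = x \<otimes>\<^bsub>LMlt L m\<^esub> y \<otimes>\<^bsub>LMlt L m\<^esub> inv\<^bsub>LMlt L m\<^esub> x \<otimes>\<^bsub>LMlt L m\<^esub> inv\<^bsub>LMlt L m\<^esub> y"
      and x: "x \<in> carrier (LMlt L m)" and y: "y \<in> lower_central (LMlt L m) (Suc j)"
      unfolding C_def by blast
    have xH: "x \<in> H" using x carrier_LMlt by simp
    have yH: "y \<in> H" and py: "P (Suc j) y" using Suc.IH[OF y] by auto
    have xB: "x \<in> Bij L" and px: "P 1 x" using H_P[OF xH] by auto
    have yB: "y \<in> Bij L" using H_P[OF yH] by auto
    have xiB: "(\<lambda>z\<in>L. inv_into L x z) \<in> Bij L" and yiB: "(\<lambda>z\<in>L. inv_into L y z) \<in> Bij L"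
      using xB yB restrict_inv_into_Bij by auto
    have ceq: "c = compose L (compose L (compose L x y) (\<lambda>z\<in>L. inv_into L x z)) (\<lambda>z\<in>L. inv_into L y z)"
      unfolding c mult_LMlt inv_LMlt[OF xH] inv_LMlt[OF yH]
      using xB yB xiB yiB by (simp add: mult_Bij compose_Bij)
    show "P (Suc (Suc j)) c" using P_comm[OF xB yB px py] ceq by simp
  qed
  have CB: "C \<subseteq> Bij L" using CH H_P by blast
  have geq: "generate (LMlt L m) C = generate (BijGroup L) C"
    unfolding LMlt_def using group.generate_consistent[OF group_BijGroup CH subH] .
  have "P (Suc (Suc j)) g" using gen_P[OF CB CP _] g geq by simp
  moreover have "g \<in> H" using group.generate_incl[OF grp] CH carrier_LMlt g by blast
  ultimately show ?case by simp
qed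

lemma one_lc: "\<one>\<^bsub>LMlt L m\<^esub> \<in> lower_central (LMlt L m) (Suc j)"
proof (cases j)
  case 0 thus ?thesis using grp by (simp add: group.is_monoid monoid.one_closed)
next
  case (Suc k) thus ?thesis by (simp add: generate.one)
qed

lemma main:
  assumes D: "dim_subloop L m e (Suc n) = {e}"
  shows "nilpotent_class_le (LMlt L m) n"
  unfolding nilpotent_class_le_def
proof (intro conjI grp)
  show "lower_central (LMlt L m) (Suc n) = {\<one>\<^bsub>LMlt L m\<^esub>}"
  proof
    show "{\<one>\<^bsub>LMlt L m\<^esub>} \<subseteq> lower_central (LMlt L m) (Suc n)" using one_lc by simp
  next
    show "lower_central (LMlt L m) (Suc n) \<subseteq> {\<one>\<^bsub>LMlt L m\<^esub>}"
    proof
      fix g assume "g \<in> lower_central (LMlt L m) (Suc n)"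
      hence gH: "g \<in> H" and pg: "P (Suc n) g" using lc_P by auto
      have gB: "g \<in> Bij L" using H_P[OF gH] by simp
      have gfix: "g x = x" if x: "x \<in> L" for x
      proof -
        define h where "h = la x"
        have hB: "h \<in> Bij L" unfolding h_def using la_Bij[OF x] .
        define hi where "hi = (\<lambda>y\<in>L. inv_into L h y)"
        have hiB: "hi \<in> Bij L" unfolding hi_def using restrict_inv_into_Bij[OF hB] .
        define c where "c = compose L hi (compose L g h)"
        have cB: "c \<in> Bij L" unfolding c_def using compose_Bij[OF hiB compose_Bij[OF gB hB]] .
        have pc: "P (Suc n) c" unfolding c_def hi_def h_def using P_conj[OF gB la_Bij[OF x] pg P_gen[OF x]] .
        have i0: "inF 0 (basis e)" using inF0[OF V_basis[OF e_L]] .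
        have "inF (0 + Suc n) (\<lambda>z. Tact L c (basis e) z - basis e z)"
          using pc[unfolded P_def, rule_format, OF i0] .
        hence "inF (Suc n) (\<lambda>z. basis (c e) z - basis e z)"
          unfolding Tact_basis[OF cB e_L] by simp
        hence ia: "in_aug_pow L m (Suc n) (\<lambda>z. basis (c e) z - basis e z)"
          using inF_aug[of "Suc n"] by simp
        have ceL: "c e \<in> L" by (rule funcset_mem[OF Bij_imp_funcset[OF cB] e_L])
        have "c e \<in> dim_subloop L m e (Suc n)"
          unfolding dim_subloop_def aug_pow_def using ceL ia by (intro CollectI conjI)
        hence "c e \<in> {e}" unfolding D .
        hence ce: "c e = e" by simp
        have hbij: "bij_betw h L L" using hB Bij_bij by blast
        have "h e = m x e" using e_L unfolding h_def la_def by simp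
        also have "\<dots> = x" using x loop unfolding is_loop_def by blast
        finally have he: "h e = x" .
        have gx: "g x \<in> L" by (rule funcset_mem[OF Bij_imp_funcset[OF gB] x])
        have "compose L g h e = g x" using e_L he unfolding compose_def by simp
        moreover have "compose L g h e \<in> L" using gx calculation by simp
        ultimately have "c e = inv_into L h (g x)" using e_L unfolding c_def hi_def compose_def by simp
        hence "inv_into L h (g x) = e" using ce by simp
        hence "h (inv_into L h (g x)) = x" using he by simp
        thus "g x = x" using bij_betw_inv_into_right[OF hbij gx] by simp
      qed
      have "g = (\<lambda>x\<in>L. x)"
      proof (rule ext)
        fix x show "g x = (\<lambda>x\<in>L. x) x"
          using gfix[of x] extensional_arb[OF Bij_imp_extensional[OF gB], of x] by (cases "x \<in> L") simp_all
      qed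
      thus "g \<in> {\<one>\<^bsub>LMlt L m\<^esub>}" by (simp add: one_LMlt)
    qed
  qed
qed

end

theorem theorem3p1:
  fixes L :: "'a set" and m :: "'a \<Rightarrow> 'a \<Rightarrow> 'a" and e :: 'a and n :: nat
  assumes "is_loop L m e"
    and "torsion_free_nilpotent_class L m e n"
  shows "nilpotent_class_le (LMlt L m) n"
proof -
  interpret lp L m e using assms(1) by unfold_locales
  show ?thesis using main assms(2) by (simp add: torsion_free_nilpotent_class_def)
qed

end
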